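(* Assume $r>\mu$. (a) If $C-rK_O\le0$ and $C+rK_I>0$, and $p_I:=e^{-\mu\delta}\frac{\lambda_2}{\lambda_2-1}(r-\mu)\left(\frac{C}{r}+K_I\right)$, then $p_I>e^{-\mu\delta}(C+rK_I)$. (b) If $C-rK_O>0$, $C+rK_I>0$, $K_I+K_O\ge0$, and $p_I$ is the largest solution of $A(\lambda_2-\lambda_1)p^{\lambda_1}+\frac{e^{(\mu-r)\delta}}{r-\mu}(\lambda_2-1)p-\lambda_2e^{-r\delta}\left(\frac{C}{r}+K_I\right)=0$, then $p_I>e^{-\mu\delta}(C+rK_I)$. (c) If $C-rK_O>0$, $C+rK_I>0$, $K_I+K_O<0$ and $p_O<e^{-\mu\delta}(C+rK_I)$, and $p_I^{(1)}<p_I^{(2)}$ are the entry thresholds for which $\tau_I^*:=\inf\{t>0:P(t)\le p_I^{(1)}\text{ or }P(t)\ge p_I^{(2)}\}$ maximizes the problem defining $H$ (equivalently, $(p_I^{(1)},p_I^{(2)})$ is the solution with $p_I^{(1)}<p_I^{(2)}$ of the smooth-fit system: there are constants $B_1,B_2$ with $B_1x^{\lambda_1}+B_2x^{\lambda_2}=-e^{-r\delta}(K_I+K_O)$ and $\lambda_1B_1x^{\lambda_1-1}+\lambda_2B_2x^{\lambda_2-1}=0$ at $x=p_I^{(1)}$, and $B_1y^{\lambda_1}+B_2y^{\lambda_2}=Ay^{\lambda_1}+\frac{e^{(\mu-r)\delta}}{r-\mu}y-e^{-r\delta}(\frac{C}{r}+K_I)$ and $\lambda_1B_1y^{\lambda_1-1}+\lambda_2B_2y^{\lambda_2-1}=\lambda_1Ay^{\lambda_1-1}+\frac{e^{(\mu-r)\delta}}{r-\mu}$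 at $y=p_I^{(2)}$, with $p_I^{(1)}\le p_O$), then $p_I^{(1)}<e^{-\mu\delta}(C-rK_O)$ and $p_I^{(2)}>e^{-\mu\delta}(C+rK_I)$.
   Context: Price $P$: $\mathrm{d}P=\mu P\,\mathrm{d}t+\sigma P\,\mathrm{d}B$, $P(0)=p>0$, with $B$ a standard Brownian motion, $\mu\in\mathbb{R}$, $\sigma>0$; $\mathbb{E}^p$ is expectation given $P(0)=p$; stopping times valued in $[0,+\infty]$ with $e^{-r\tau}(\cdots)=0$ on $\{\tau=\infty\}$. Constants $r>0$, $C,K_I,K_O\in\mathbb{R}$, $\delta\ge0$. $\lambda_1<\lambda_2$ are the roots of $r-\mu\lambda-\frac12\sigma^2\lambda(\lambda-1)=0$. $k_1:=\frac{e^{(\mu-r)\delta}-1}{\mu-r}$, $k_0:=\frac{C}{r}(e^{-r\delta}-1)+e^{-r\delta}K_I$, $l_1:=-k_1$, $l_0:=-\frac{C}{r}(e^{-r\delta}-1)+e^{-r\delta}K_O$. $G(p):=\sup_{\tau_O}\mathbb{E}^p[\int_0^{\tau_O}e^{-rt}(P(t)-C)\mathrm{d}t-e^{-r\tau_O}(l_1P(\tau_O)+l_0)]$ and $H(p):=\sup_{\tau_I}\mathbb{E}^p[e^{-r\tau_I}(G(P(\tau_I))-k_1P(\tau_I)-k_0)]$. When $C>rK_O$: $p_O:=e^{-\mu\delta}\frac{\lambda_1}{\lambda_1-1}(r-\mu)(\frac{C}{r}-K_O)$, $A:=e^{(\mu-r)\delta}p_O^{1-\lambda_1}/(\lambda_1(\mu-r))$.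 *)

theory Defs
  imports "HOL-Analysis.Analysis"
begin

definition pO :: "real \<Rightarrow> real \<Rightarrow> real \<Rightarrow> real \<Rightarrow> real \<Rightarrow> real \<Rightarrow> real" where
  "pO mu r C KO delta l1 =
     exp (- mu * delta) * (l1 / (l1 - 1)) * (r - mu) * (C / r - KO)"

definition Acoef :: "real \<Rightarrow> real \<Rightarrow> real \<Rightarrow> real \<Rightarrow> real \<Rightarrow> real \<Rightarrow> real" where
  "Acoef mu r C KO delta l1 =
     exp ((mu - r) * delta) * (pO mu r C KO delta l1) powr (1 - l1) / (l1 * (mu - r))"

end

theory Submission imports Defs begin

lemma powr_tangent:
  fixes x e :: real
  assumes x: "0 < x" "x \<noteq> 1" and e: "e > 1 \<or> e < 0"
  shows "x powr e > 1 + e * (x - 1)"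
proof -
  define f where "f = (\<lambda>t::real. t powr e - e * t)"
  have der: "\<And>t. t > 0 \<Longrightarrow> DERIV f t :> (e * t powr (e - 1) - e)"
    unfolding f_def by (auto intro!: derivative_eq_intros)
  show ?thesis
  proof (cases "x > 1")
    case True
    obtain z where z: "1 < z" "z < x" "f x - f 1 = (x - 1) * (e * z powr (e - 1) - e)"
      using MVT2[of 1 x f "\<lambda>t. e * t powr (e - 1) - e"] True der by force
    have "e * z powr (e - 1) - e > 0"
    proof (cases "e > 1")
      case True
      then have "z powr (e - 1) > 1" using z by simp
      then show ?thesis using True by (simp add: algebra_simps)
    next
      case False
      then have "z powr (e - 1) < 1" using z e by (intro powr_less_one) auto
      then have "e * (z powr (e - 1) - 1) > 0" using False e by (intro mult_neg_neg) auto
      then show ?thesis by (simp add: algebra_simps)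
    qed
    then have "f x - f 1 > 0" using z True by simp
    then show ?thesis unfolding f_def by (simp add: algebra_simps)
  next
    case False
    then have xl: "x < 1" using x by simp
    obtain z where z: "x < z" "z < 1" "f 1 - f x = (1 - x) * (e * z powr (e - 1) - e)"
      using MVT2[of x 1 f "\<lambda>t. e * t powr (e - 1) - e"] xl x der by force
    have zpos: "z > 0" using z x by simp
    have "e * z powr (e - 1) - e < 0"
    proof (cases "e > 1")
      case True
      have "z powr (e - 1) < 1 powr (e - 1)" 
        using True z zpos by (intro powr_less_mono2) auto
      then have "z powr (e - 1) < 1" by simp
      then have "e * (z powr (e - 1) - 1) < 0" using True by (intro mult_pos_neg) auto
      then show ?thesis by (simp add: algebra_simps)
    next
      case False
      have "1 powr (e - 1) < z powr (e - 1)"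
        using False e z zpos by (intro powr_less_mono2_neg) auto
      then have "z powr (e - 1) > 1" by simp
      then have "e * (z powr (e - 1) - 1) < 0" using False e by (intro mult_neg_pos) auto
      then show ?thesis by (simp add: algebra_simps)
    qed
    then have "f 1 - f x < 0" using z xl by (simp add: mult_pos_neg)
    then show ?thesis unfolding f_def by (simp add: algebra_simps)
  qed
qed

lemma basics:
  fixes mu sigma r l1 l2 :: real
  assumes sigma: "sigma > 0" and rpos: "r > 0"
    and roots: "r - mu * l1 - sigma^2 / 2 * l1 * (l1 - 1) = 0"
               "r - mu * l2 - sigma^2 / 2 * l2 * (l2 - 1) = 0"
    and l12: "l1 < l2" and rmu: "r > mu"
  shows "mu = sigma^2/2 * (1 - l1 - l2)" "r = - (sigma^2/2) * l1 * l2" "l1 < 0" "l2 > 1"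
proof -
  define s where "s = sigma^2/2"
  have s: "s > 0" using sigma by (simp add: s_def)
  have r1: "r - mu * l1 - s * l1 * (l1 - 1) = 0" using roots(1) by (simp add: s_def)
  have r2: "r - mu * l2 - s * l2 * (l2 - 1) = 0" using roots(2) by (simp add: s_def)
  have "(l1 - l2) * (- mu - s * (l1 + l2 - 1)) = 0" using r1 r2 by (simp add: algebra_simps)
  moreover have "l1 - l2 \<noteq> 0" using l12 by simp
  ultimately have "- mu - s * (l1 + l2 - 1) = 0" by simp
  then have mu: "mu = s * (1 - l1 - l2)" by (simp add: algebra_simps)
  have "r = mu * l1 + s * l1 * (l1 - 1)" using r1 by simp
  then have "r = s * (1 - l1 - l2) * l1 + s * l1 * (l1 - 1)" using mu by simp
  then have r: "r = - s * l1 * l2" by (simp add: algebra_simps)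
  show "mu = sigma^2/2 * (1 - l1 - l2)" "r = - (sigma^2/2) * l1 * l2" using mu r by (simp_all add: s_def)
  have "s * (l1 * l2) < 0" using r rpos by (simp add: algebra_simps)
  then have "l1 * l2 < 0" using s by (simp add: mult_less_0_iff)
  then show l1: "l1 < 0" using l12 by (auto simp add: mult_less_0_iff)
  have "r - mu = - s * ((1 - l1) * (1 - l2))" using mu r by (simp add: algebra_simps)
  then have "s * ((1 - l1) * (1 - l2)) < 0" using rmu by simp
  then have "(1 - l1) * (1 - l2) < 0" using s by (simp add: mult_less_0_iff)
  then show "l2 > 1" using l1 by (auto simp add: mult_less_0_iff)
qed

lemma partA:
  fixes mu r C KI delta l2 :: real
  assumes rpos: "r > 0" and l2: "l2 > 1" and rl2: "r - mu * l2 > 0" and CK: "C + r * KI > 0"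
  shows "exp (- mu * delta) * (l2 / (l2 - 1)) * (r - mu) * (C / r + KI)
         > exp (- mu * delta) * (C + r * KI)"
proof -
  have "(l2 / (l2 - 1)) * (r - mu) - r = (r - mu * l2) / (l2 - 1)"
    using l2 by (simp add: field_simps)
  also have "\<dots> > 0" using l2 rl2 by simp
  finally have X: "(l2 / (l2 - 1)) * (r - mu) > r" by simp
  have b: "C / r + KI > 0" using CK rpos by (simp add: field_simps)
  have "(l2 / (l2 - 1)) * (r - mu) * (C / r + KI) > r * (C / r + KI)"
    using X b by (intro mult_strict_right_mono) auto
  also have "r * (C / r + KI) = C + r * KI" using rpos by (simp add: field_simps)
  finally have "(l2 / (l2 - 1)) * (r - mu) * (C / r + KI) > C + r * KI" .
  then have "exp (- mu * delta) * (C + r * KI) < exp (- mu * delta) * ((l2 / (l2 - 1)) * (r - mu) * (C / r + KI))"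
    by (intro mult_strict_left_mono) auto
  then show ?thesis by (simp only: mult.assoc)
qed

lemma pOfacts:
  fixes mu r C KO delta l1 :: real
  assumes l1: "l1 < 0" and rmu: "r > mu" and a: "C / r - KO > 0"
  shows "pO mu r C KO delta l1 > 0"
    "exp ((mu - r) * delta) / (r - mu) * pO mu r C KO delta l1
       = exp (- r * delta) * l1 * (C / r - KO) / (l1 - 1)"
    "Acoef mu r C KO delta l1 * pO mu r C KO delta l1 powr l1
       = exp (- r * delta) * (C / r - KO) / (1 - l1)"
    "Acoef mu r C KO delta l1 > 0"
proof -
  define P where "P = pO mu r C KO delta l1"
  define a where "a = C / r - KO"
  have P: "P = exp (- mu * delta) * (l1 / (l1 - 1)) * (r - mu) * a"
    by (simp add: P_def pO_def a_def)
  have q: "l1 / (l1 - 1) > 0" using l1 by (simp add: divide_neg_neg)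
  have "exp (- mu * delta) * (l1 / (l1 - 1)) * (r - mu) * a > 0"
    using q rmu a by (intro mult_pos_pos) (auto simp: a_def)
  then show Ppos: "pO mu r C KO delta l1 > 0" unfolding P_def[symmetric] P .
  have ee: "exp ((mu - r) * delta) * exp (- mu * delta) = exp (- r * delta)"
    by (simp add: exp_add[symmetric] algebra_simps)
  have cP: "exp ((mu - r) * delta) / (r - mu) * P = exp (- r * delta) * l1 * a / (l1 - 1)"
  proof -
    have "l1 - 1 \<noteq> 0" "r - mu \<noteq> 0" using l1 rmu by auto
    then have "exp ((mu - r) * delta) / (r - mu) * (exp (- mu * delta) * (l1 / (l1 - 1)) * (r - mu) * a)
      = (exp ((mu - r) * delta) * exp (- mu * delta)) * (l1 / (l1 - 1)) * a"
      by (simp only: mult.assoc) simp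
    also have "\<dots> = (exp ((mu - r) * delta) * exp (- mu * delta)) * l1 * a / (l1 - 1)"
      by simp
    finally show ?thesis unfolding P ee .
  qed
  then show "exp ((mu - r) * delta) / (r - mu) * pO mu r C KO delta l1
       = exp (- r * delta) * l1 * (C / r - KO) / (l1 - 1)" by (simp add: P_def a_def)
  have Pp: "P > 0" using Ppos P_def by simp
  have "P powr (1 - l1) * P powr l1 = P" using Pp by (simp add: powr_add[symmetric])
  then have "Acoef mu r C KO delta l1 * P powr l1 = exp ((mu - r) * delta) * P / (l1 * (mu - r))"
    unfolding Acoef_def P_def[symmetric] by (simp add: field_simps)
  also have "\<dots> = - (exp ((mu - r) * delta) / (r - mu) * P) / l1"
    using rmu l1 by (simp add: field_simps)
  also have "\<dots> = exp (- r * delta) * a / (1 - l1)"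
    unfolding cP using l1 by (simp add: field_simps)
  finally show "Acoef mu r C KO delta l1 * pO mu r C KO delta l1 powr l1
       = exp (- r * delta) * (C / r - KO) / (1 - l1)" by (simp add: P_def a_def)
  have "l1 * (mu - r) > 0" using l1 rmu by (simp add: mult_neg_neg)
  then show "Acoef mu r C KO delta l1 > 0" unfolding Acoef_def P_def[symmetric]
    using Pp by simp
qed

lemma cancel_aux: "(d::real) \<noteq> 0 \<Longrightarrow> e \<noteq> 0 \<Longrightarrow> d * X * (Y / (e * d)) = X * Y / e"
  by (simp add: field_simps)

lemma aux2: "(d::real) \<noteq> 0 \<Longrightarrow> k * (E * a / d * T) + (- l2 * E * b / d) = E / d * (k * a * T - l2 * b)"
  by (simp add: field_simps)

lemma aux3: "(d::real) \<noteq> 0 \<Longrightarrow> E * a / d + E * (1 - d) * a / ((1 - d) - 1) = E * a"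
  by (simp add: field_simps)

lemma aux4: "(d::real) \<noteq> 0 \<Longrightarrow> l2 * D / d * U + (- l1 * D / d) * V - D = D / d * (l2 * U - l1 * V - d)"
  by (simp add: field_simps)

lemma partB:
  fixes mu s r C KI KO delta l1 l2 pI :: real
  assumes s: "s > 0" and mu: "mu = s * (1 - l1 - l2)" and r: "r = - s * l1 * l2"
    and l1: "l1 < 0" and l2: "l2 > 1" and rpos: "r > 0" and rmu: "r > mu"
    and hO: "C - r * KO > 0" and hI: "C + r * KI > 0" and hK: "KI + KO \<ge> 0"
    and pI: "pI > 0"
    and max: "\<forall>p. p > 0 \<and> Acoef mu r C KO delta l1 * (l2 - l1) * p powr l1
           + exp ((mu - r) * delta) / (r - mu) * (l2 - 1) * p
           - l2 * exp (- r * delta) * (C / r + KI) = 0 \<longrightarrow> p \<le> pI"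
  shows "pI > exp (- mu * delta) * (C + r * KI)"
proof -
  define E where "E = exp (- r * delta)"
  define c where "c = exp ((mu - r) * delta) / (r - mu)"
  define a where "a = C / r - KO"
  define b where "b = C / r + KI"
  define q0 where "q0 = exp (- mu * delta) * (C + r * KI)"
  define P where "P = pO mu r C KO delta l1"
  define Av where "Av = Acoef mu r C KO delta l1"
  define f where "f = (\<lambda>p. Av * (l2 - l1) * p powr l1 + c * (l2 - 1) * p - l2 * E * b)"
  have Epos: "E > 0" by (simp add: E_def)
  have cpos: "c > 0" using rmu by (simp add: c_def)
  have apos: "a > 0" using hO rpos by (simp add: a_def field_simps)
  have bpos: "b > 0" using hI rpos by (simp add: b_def field_simps)
  have ba: "b \<ge> a" using hK by (simp add: a_def b_def)
  have rb: "C + r * KI = r * b" using rpos by (simp add: b_def field_simps)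
  have q0pos: "q0 > 0" using hI by (simp add: q0_def)
  have Pfacts: "P > 0" "Av * P powr l1 = E * a / (1 - l1)" "Av > 0"
    using pOfacts[OF l1 rmu apos[unfolded a_def]] by (simp_all add: P_def Av_def E_def a_def)
  have P: "P = exp (- mu * delta) * (l1 / (l1 - 1)) * (r - mu) * a"
    by (simp add: P_def pO_def a_def)
  have rmu': "r - mu = s * (1 - l1) * (l2 - 1)" using mu r by (simp add: algebra_simps)
  define t where "t = l2 * b / ((l2 - 1) * a)"
  have q0P: "q0 = P * t"
  proof -
    have "P * t = exp (- mu * delta) * ((l1 / (l1 - 1)) * (s * (1 - l1) * (l2 - 1)) * a * (l2 * b / ((l2 - 1) * a)))"
      unfolding P t_def rmu' by (simp add: mult.assoc)
    also have "(l1 / (l1 - 1)) * (s * (1 - l1) * (l2 - 1)) * a * (l2 * b / ((l2 - 1) * a)) = r * b"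
    proof -
      have h1: "(l1/(l1-1))*(1-l1) = -l1" using l1 by (simp add: field_simps)
      have h2: "(l2-1)*a*(l2*b/((l2-1)*a)) = l2*b" using l2 apos by simp
      have "(l1 / (l1 - 1)) * (s * (1 - l1) * (l2 - 1)) * a * (l2 * b / ((l2 - 1) * a))
          = s * ((l1/(l1-1))*(1-l1)) * ((l2-1)*a*(l2*b/((l2-1)*a)))" by (simp only: mult_ac)
      also have "\<dots> = s * (-l1) * (l2*b)" by (simp only: h1 h2)
      finally show ?thesis unfolding r by simp
    qed
    finally show ?thesis unfolding q0_def rb by simp
  qed
  have tpos: "t > 0" using l2 apos bpos by (simp add: t_def)
  have ee: "exp ((mu - r) * delta) * exp (- mu * delta) = E"
    by (simp add: E_def exp_add[symmetric] algebra_simps)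
  have cq0: "c * q0 = E * r * b / (r - mu)"
    unfolding c_def q0_def rb using ee by (simp add: field_simps)
  have fq0: "f q0 = E / (1 - l1) * ((l2 - l1) * a * t powr l1 - l2 * b)"
  proof -
    have H1: "Av * q0 powr l1 = E * a / (1 - l1) * t powr l1"
    proof -
      have "Av * q0 powr l1 = (Av * P powr l1) * t powr l1"
        unfolding q0P using Pfacts(1) tpos by (simp add: powr_mult)
      then show ?thesis using Pfacts(2) by simp
    qed
    have H2: "c * (l2 - 1) * q0 = (l2 - 1) * E * r * b / (r - mu)"
    proof -
      have "c * (l2 - 1) * q0 = (l2 - 1) * (c * q0)" by (simp only: mult_ac)
      then show ?thesis unfolding cq0 by simp
    qed
    have H3: "(l2 - 1) * E * r * b / (r - mu) - l2 * E * b = - l2 * E * b / (1 - l1)"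
    proof -
      have rr0: "r * ((1 - l1) * (l2 - 1)) = (- l1 * l2) * (r - mu)"
        unfolding rmu' by (subst r) (simp add: algebra_simps)
      have nz: "r - mu \<noteq> 0" "(1 - l1) * (l2 - 1) \<noteq> 0" using rmu l1 l2 by auto
      have nz1: "1 - l1 \<noteq> 0" "l2 - 1 \<noteq> 0" using l1 l2 by auto
      have rr: "r / (r - mu) = - l1 * l2 / ((1 - l1) * (l2 - 1))"
      proof -
        have "r / (r - mu) = r * ((1 - l1) * (l2 - 1)) / ((r - mu) * ((1 - l1) * (l2 - 1)))"
          using nz by simp
        also have "\<dots> = ((- l1 * l2) * (r - mu)) / ((r - mu) * ((1 - l1) * (l2 - 1)))"
          unfolding rr0 ..
        also have "\<dots> = - l1 * l2 / ((1 - l1) * (l2 - 1))" using nz by simp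
        finally show ?thesis .
      qed
      have "(l2 - 1) * E * r * b / (r - mu) = (l2 - 1) * (E * b) * (r / (r - mu))" by simp
      also have "\<dots> = E * b * (- l1 * l2) / (1 - l1)" unfolding rr by (rule cancel_aux[OF nz1(2) nz1(1)])
      also have "\<dots> = - E * b * l1 * l2 / (1 - l1)" by simp
      finally show ?thesis using nz1 by (simp add: diff_divide_distrib[symmetric] field_simps)
    qed
    have "f q0 = (l2 - l1) * (Av * q0 powr l1) + (c * (l2 - 1) * q0 - l2 * E * b)"
      unfolding f_def by (simp add: algebra_simps)
    also have "\<dots> = (l2 - l1) * (E * a / (1 - l1) * t powr l1) + (- l2 * E * b / (1 - l1))"
      unfolding H1 H2 H3 ..
    also have "\<dots> = E / (1 - l1) * ((l2 - l1) * a * t powr l1 - l2 * b)"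
      using l1 by (intro aux2) simp
    finally show ?thesis .
  qed
  define u where "u = l2 / (l2 - 1)"
  have u1: "u > 1" using l2 by (simp add: u_def)
  have tu: "t = u * b / a" by (simp add: t_def u_def)
  have tgeu: "t \<ge> u" unfolding tu using u1 apos ba by (simp add: field_simps)
  have tang: "u powr (1 - l1) > 1 + (1 - l1) * (u - 1)"
    using u1 l1 by (intro powr_tangent) auto
  have "(l2 - 1) * (1 + (1 - l1) * (u - 1)) = l2 - l1"
    using l2 by (simp add: u_def field_simps)
  then have key: "l2 - l1 < (l2 - 1) * u powr (1 - l1)"
    using tang l2 by (smt (verit) mult_strict_left_mono)
  have "u powr (l1 - 1) = 1 / u powr (1 - l1)"
    using u1 by (simp add: powr_minus[symmetric] divide_inverse)
  then have eqU: "(l2 - l1) * u powr (l1 - 1) = (l2 - l1) / u powr (1 - l1)" by simp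
  have Upos: "u powr (1 - l1) > 0" using u1 by simp
  have "(l2 - l1) / u powr (1 - l1) < l2 - 1" using key Upos by (simp add: divide_less_eq mult.commute)
  then have key2: "(l2 - l1) * u powr (l1 - 1) < l2 - 1" unfolding eqU .
  have tt: "t powr (l1 - 1) \<le> u powr (l1 - 1)"
  proof (cases "t = u")
    case False
    then show ?thesis using tgeu u1 l1 by (intro less_imp_le powr_less_mono2_neg) auto
  qed simp
  have tl1: "t powr l1 = t * t powr (l1 - 1)"
    using tpos by (simp add: powr_diff)
  have "(l2 - l1) * a * t powr l1 = (a * t) * ((l2 - l1) * t powr (l1 - 1))"
    unfolding tl1 by (simp add: algebra_simps)
  also have "\<dots> \<le> (a * t) * ((l2 - l1) * u powr (l1 - 1))"
    using tt apos tpos l1 l2 by (intro mult_left_mono) auto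
  also have "\<dots> < (a * t) * (l2 - 1)"
    using key2 apos tpos by (intro mult_strict_left_mono) auto
  also have "\<dots> = l2 * b" unfolding t_def using apos l2 by (simp add: field_simps)
  finally have "(l2 - l1) * a * t powr l1 - l2 * b < 0" by simp
  then have fneg: "f q0 < 0" unfolding fq0 using Epos l1
    by (intro mult_pos_neg) auto
  define M where "M = q0 + l2 * E * b / (c * (l2 - 1)) + 1"
  have "l2 * E * b / (c * (l2 - 1)) > 0" using l2 Epos bpos cpos by simp
  then have Mq: "M > q0" by (simp add: M_def)
  have "c * (l2 - 1) * M = c * (l2 - 1) * q0 + l2 * E * b + c * (l2 - 1)"
    using cpos l2 by (simp add: M_def field_simps)
  then have "c * (l2 - 1) * M > l2 * E * b" using cpos l2 q0pos by (smt (verit) mult_pos_pos)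
  moreover have "Av * (l2 - l1) * M powr l1 \<ge> 0" using Pfacts l1 l2 by simp
  ultimately have fpos: "f M > 0" unfolding f_def by simp
  have cont: "\<forall>x. q0 \<le> x \<and> x \<le> M \<longrightarrow> isCont f x"
  proof (intro allI impI)
    fix x assume "q0 \<le> x \<and> x \<le> M"
    then have "x > 0" using q0pos by simp
    then show "isCont f x" unfolding f_def by (intro continuous_intros) auto
  qed
  obtain x where x: "q0 \<le> x" "x \<le> M" "f x = 0"
    using IVT[of f q0 0 M] fneg fpos Mq cont by auto
  have "x \<noteq> q0" using x fneg by auto
  then have xq: "x > q0" using x by simp
  have "x \<le> pI" using max xq q0pos x(3) unfolding f_def Av_def c_def E_def b_def
    by (auto simp: algebra_simps)
  then show ?thesis using xq q0_def by simp
qed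

lemma deriv_rho:
  fixes y l1 l2 c E b B2 :: real
  assumes y: "y > 0"
  shows "((\<lambda>y. (l2 - l1) * B2 - (1 - l1) * c * y powr (1 - l2) - l1 * E * b * y powr (- l2))
     has_real_derivative (y powr (- l2 - 1) * ((1 - l1) * (l2 - 1) * c * y + l1 * l2 * E * b))) (at y)"
proof -
  have e1: "y powr (- l2) = y * y powr (- l2 - 1)" using y by (simp add: powr_diff)
  show ?thesis using y
    by (auto intro!: derivative_eq_intros simp: e1 algebra_simps)
qed

lemma deriv_chi:
  fixes y l1 l2 c E b B1 B2 Av :: real
  assumes y: "y > 0"
  shows "((\<lambda>y. (B1 - Av) + B2 * y powr (l2 - l1) - c * y powr (1 - l1) + E * b * y powr (- l1))
     has_real_derivative (y powr (l2 - l1 - 1) * ((l2 - l1) * B2 - (1 - l1) * c * y powr (1 - l2) - l1 * E * b * y powr (- l2)))) (at y)"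
proof -
  have e1: "y powr (- l1) = y powr (l2 - l1 - 1) * y powr (1 - l2)"
    using y by (simp add: powr_add[symmetric])
  have e2: "y powr (- l1 - 1) = y powr (l2 - l1 - 1) * y powr (- l2)"
    using y by (simp add: powr_add[symmetric])
  show ?thesis using y
    by (auto intro!: derivative_eq_intros simp: e1 e2 algebra_simps)
qed

lemma partC:
  fixes mu s r C KI KO delta l1 l2 p1 p2 B1 B2 :: real
  assumes s: "s > 0" and mu: "mu = s * (1 - l1 - l2)" and r: "r = - s * l1 * l2"
    and l1: "l1 < 0" and l2: "l2 > 1" and rpos: "r > 0" and rmu: "r > mu"
    and hO: "C - r * KO > 0" and hI: "C + r * KI > 0" and hK: "KI + KO < 0"
    and hPq: "pO mu r C KO delta l1 < exp (- mu * delta) * (C + r * KI)"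
    and p1: "0 < p1" and p12: "p1 < p2" and p1O: "p1 \<le> pO mu r C KO delta l1"
    and e1: "B1 * p1 powr l1 + B2 * p1 powr l2 = - exp (- r * delta) * (KI + KO)"
    and e2: "l1 * B1 * p1 powr (l1 - 1) + l2 * B2 * p1 powr (l2 - 1) = 0"
    and e3: "B1 * p2 powr l1 + B2 * p2 powr l2
           = Acoef mu r C KO delta l1 * p2 powr l1
             + exp ((mu - r) * delta) / (r - mu) * p2 - exp (- r * delta) * (C / r + KI)"
    and e4: "l1 * B1 * p2 powr (l1 - 1) + l2 * B2 * p2 powr (l2 - 1)
           = l1 * Acoef mu r C KO delta l1 * p2 powr (l1 - 1)
             + exp ((mu - r) * delta) / (r - mu)"
  shows "p1 < exp (- mu * delta) * (C - r * KO) \<and> p2 > exp (- mu * delta) * (C + r * KI)"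
proof -
  define E where "E = exp (- r * delta)"
  define c where "c = exp ((mu - r) * delta) / (r - mu)"
  define a where "a = C / r - KO"
  define b where "b = C / r + KI"
  define q0 where "q0 = exp (- mu * delta) * (C + r * KI)"
  define P where "P = pO mu r C KO delta l1"
  define Av where "Av = Acoef mu r C KO delta l1"
  define D where "D = E * (a - b)"
  have Epos: "E > 0" by (simp add: E_def)
  have cpos: "c > 0" using rmu by (simp add: c_def)
  have apos: "a > 0" using hO rpos by (simp add: a_def field_simps)
  have bpos: "b > 0" using hI rpos by (simp add: b_def field_simps)
  have ab: "a - b = - (KI + KO)" by (simp add: a_def b_def)
  have Dpos: "D > 0" using Epos hK ab by (simp add: D_def)
  have rb: "C + r * KI = r * b" using rpos by (simp add: b_def field_simps)
  have ra: "C - r * KO = r * a" using rpos by (simp add: a_def field_simps)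
  have q0pos: "q0 > 0" using hI by (simp add: q0_def)
  have Pfacts: "P > 0" "c * P = E * l1 * a / (l1 - 1)" "Av * P powr l1 = E * a / (1 - l1)"
    using pOfacts[OF l1 rmu apos[unfolded a_def]] by (simp_all add: P_def Av_def E_def a_def c_def)
  have P: "P = exp (- mu * delta) * (l1 / (l1 - 1)) * (r - mu) * a"
    by (simp add: P_def pO_def a_def)
  have rmu': "r - mu = s * (1 - l1) * (l2 - 1)" using mu r by (simp add: algebra_simps)
  have nz1: "1 - l1 \<noteq> 0" "l2 - 1 \<noteq> 0" "l1 - 1 \<noteq> 0" "l2 - l1 \<noteq> 0" using l1 l2 by auto
  have "l1 / (l1 - 1) * (r - mu) = - l1 * s * (l2 - 1)"
  proof -
    have h1: "(l1/(l1-1))*(1-l1) = -l1" using l1 by (simp add: field_simps)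
    have "l1 / (l1 - 1) * (r - mu) = s * ((l1/(l1-1))*(1-l1)) * (l2 - 1)"
      unfolding rmu' by (simp only: mult_ac)
    then show ?thesis unfolding h1 by simp
  qed
  then have "r - l1 / (l1 - 1) * (r - mu) = - s * l1" unfolding r by (simp add: algebra_simps)
  moreover have "s * l1 < 0" using s l1 by (simp add: mult_pos_neg)
  ultimately have "l1 / (l1 - 1) * (r - mu) < r" by linarith
  then have "l1 / (l1 - 1) * (r - mu) * a < r * a" using apos by (intro mult_strict_right_mono)
  then have "exp (- mu * delta) * (l1 / (l1 - 1) * (r - mu) * a) < exp (- mu * delta) * (r * a)"
    by (intro mult_strict_left_mono) auto
  then have Pless: "P < exp (- mu * delta) * (C - r * KO)" unfolding P ra by (simp add: mult.assoc)
  have claim1: "p1 < exp (- mu * delta) * (C - r * KO)" using p1O Pless P_def by simp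
  have claim2: "p2 > q0"
  proof (rule ccontr)
    assume "\<not> p2 > q0"
    then have p2q: "p2 \<le> q0" by simp
    have p2pos: "p2 > 0" using p1 p12 by simp
    define X where "X = B1 * p1 powr l1"
    define Y where "Y = B2 * p1 powr l2"
    have Dv: "D = - exp (- r * delta) * (KI + KO)" unfolding D_def ab E_def by (simp add: algebra_simps)
    have XY1: "X + Y = D" unfolding Dv X_def Y_def using e1 by simp
    have pp1: "p1 powr (l1 - 1) * p1 = p1 powr l1" "p1 powr (l2 - 1) * p1 = p1 powr l2"
      using p1 by (simp_all add: powr_diff)
    have "(l1 * B1 * p1 powr (l1 - 1) + l2 * B2 * p1 powr (l2 - 1)) * p1 = 0" using e2 by simp
    then have XY2: "l1 * X + l2 * Y = 0" unfolding X_def Y_def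
      by (simp add: algebra_simps pp1[symmetric])
    have Yv: "Y = - l1 * D / (l2 - l1)"
    proof -
      have "(l2 - l1) * Y = (l1 * X + l2 * Y) - l1 * (X + Y)" by (simp add: algebra_simps)
      then have "(l2 - l1) * Y = - l1 * D" unfolding XY1 XY2 by simp
      then show ?thesis using nz1 by (simp add: field_simps)
    qed
    have Xv: "X = l2 * D / (l2 - l1)"
    proof -
      have "(l2 - l1) * X = l2 * (X + Y) - (l1 * X + l2 * Y)" by (simp add: algebra_simps)
      then have "(l2 - l1) * X = l2 * D" unfolding XY1 XY2 by simp
      then show ?thesis using nz1 by (simp add: field_simps)
    qed
    define psi where "psi = (\<lambda>y. B1 * y powr l1 + B2 * y powr l2 - Av * y powr l1 - c * y + E * b)"
    define rho where "rho = (\<lambda>y. (l2 - l1) * B2 - (1 - l1) * c * y powr (1 - l2) - l1 * E * b * y powr (- l2))"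
    define chi where "chi = (\<lambda>y. (B1 - Av) + B2 * y powr (l2 - l1) - c * y powr (1 - l1) + E * b * y powr (- l1))"
    have psi2: "psi p2 = 0" using e3 unfolding psi_def Av_def c_def E_def b_def by simp
    have eta: "rho y * y powr l2 = (l2 - l1) * B2 * y powr l2 - (1 - l1) * c * y - l1 * E * b" if "y > 0" for y
    proof -
      have "y powr (1 - l2) * y powr l2 = y" "y powr (- l2) * y powr l2 = 1"
        using that by (simp_all add: powr_add[symmetric])
      then show ?thesis unfolding rho_def by (simp add: algebra_simps)
    qed
    have chipsi: "chi y = y powr (- l1) * psi y" if "y > 0" for y
    proof -
      have "y powr l1 * y powr (- l1) = 1" "y powr l2 * y powr (- l1) = y powr (l2 - l1)"
        using that by (simp_all add: powr_add[symmetric])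
      moreover have "y * y powr (- l1) = y powr (1 - l1)"
        using that by (simp add: powr_diff powr_minus divide_inverse mult.commute)
      ultimately show ?thesis unfolding chi_def psi_def by (simp add: algebra_simps)
    qed
    have chi2: "chi p2 = 0" using chipsi[OF p2pos] psi2 by simp
    have rho2: "rho p2 = 0"
    proof -
      have pp2: "p2 powr (l1 - 1) * p2 = p2 powr l1" "p2 powr (l2 - 1) * p2 = p2 powr l2"
        using p2pos by (simp_all add: powr_diff)
      have A: "B1 * p2 powr l1 + B2 * p2 powr l2 = Av * p2 powr l1 + c * p2 - E * b"
        using e3 unfolding Av_def c_def E_def b_def by simp
      have "(l1 * B1 * p2 powr (l1 - 1) + l2 * B2 * p2 powr (l2 - 1)) * p2
            = (l1 * Av * p2 powr (l1 - 1) + c) * p2"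
        using e4 unfolding Av_def c_def by simp
      then have B: "l1 * B1 * p2 powr l1 + l2 * B2 * p2 powr l2 = l1 * Av * p2 powr l1 + c * p2"
        by (simp add: algebra_simps pp2[symmetric])
      have "(l2 - l1) * B2 * p2 powr l2 - (1 - l1) * c * p2 - l1 * E * b
          = (l1 * B1 * p2 powr l1 + l2 * B2 * p2 powr l2 - (l1 * Av * p2 powr l1 + c * p2))
            - l1 * (B1 * p2 powr l1 + B2 * p2 powr l2 - (Av * p2 powr l1 + c * p2 - E * b))"
        by (simp add: algebra_simps)
      then have "(l2 - l1) * B2 * p2 powr l2 - (1 - l1) * c * p2 - l1 * E * b = 0"
        using A B by simp
      then have "rho p2 * p2 powr l2 = 0" using eta[OF p2pos] by simp
      then show ?thesis using p2pos by simp
    qed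
    have cq0: "(1 - l1) * (l2 - 1) * c * q0 = - l1 * l2 * E * b"
    proof -
      have ee: "exp ((mu - r) * delta) * exp (- mu * delta) = E"
        by (simp add: E_def exp_add[symmetric] algebra_simps)
      have cq: "c * q0 = E * b * (r / (r - mu))"
        unfolding c_def q0_def rb using ee by (simp add: field_simps)
      have rr0: "r * ((1 - l1) * (l2 - 1)) = (- l1 * l2) * (r - mu)"
        unfolding rmu' by (subst r) (simp add: algebra_simps)
      have "(1 - l1) * (l2 - 1) * (r / (r - mu)) = r * ((1 - l1) * (l2 - 1)) / (r - mu)" by simp
      also have "\<dots> = - l1 * l2" unfolding rr0 using rmu by simp
      finally have h: "(1 - l1) * (l2 - 1) * (r / (r - mu)) = - l1 * l2" .
      have "(1 - l1) * (l2 - 1) * c * q0 = E * b * ((1 - l1) * (l2 - 1) * (r / (r - mu)))"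
        unfolding mult.assoc cq by (simp only: mult_ac)
      also have "\<dots> = - l1 * l2 * E * b" unfolding h by simp
      finally show ?thesis .
    qed
    have rho_dec: "rho x > rho y" if "0 < x" "x < y" "y \<le> q0" for x y
    proof -
      define rho' where "rho' = (\<lambda>y. y powr (- l2 - 1) * ((1 - l1) * (l2 - 1) * c * y + l1 * l2 * E * b))"
      have der: "DERIV rho z :> rho' z" if "x \<le> z" "z \<le> y" for z
        unfolding rho_def rho'_def using deriv_rho[of z l2 l1 B2 c E b] that \<open>0 < x\<close> by simp
      obtain z where z: "x < z" "z < y" "rho y - rho x = (y - x) * rho' z"
        using MVT2[OF \<open>x < y\<close> der] by blast
      have "(1 - l1) * (l2 - 1) * c * z < (1 - l1) * (l2 - 1) * c * q0"
        using z that cpos l1 l2 by (intro mult_strict_left_mono) auto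
      then have "(1 - l1) * (l2 - 1) * c * z + l1 * l2 * E * b < 0" using cq0 by simp
      moreover have "z powr (- l2 - 1) > 0" using z that by simp
      ultimately have "rho' z < 0" unfolding rho'_def by (simp add: mult_pos_neg)
      then have "(y - x) * rho' z < 0" using that by (simp add: mult_pos_neg)
      then show ?thesis using z by simp
    qed
    define T where "T = P / p1"
    have Ppos: "P > 0" using Pfacts by simp
    have T1: "T \<ge> 1" using p1O p1 by (simp add: T_def P_def)
    have Tpos: "T > 0" using T1 by simp
    have powT: "B1 * P powr l1 = X * T powr l1" "B2 * P powr l2 = Y * T powr l2"
      unfolding X_def Y_def T_def using p1 Ppos by (simp_all add: powr_divide)
    have AcP: "Av * P powr l1 + c * P = E * a"
    proof -
      have "E * a / (1 - l1) + E * l1 * a / (l1 - 1) = E * a" using aux3[of "1 - l1" E a] l1 by simp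
      then show ?thesis using Pfacts by simp
    qed
    have psiP: "psi P = D / (l2 - l1) * (l2 * T powr l1 - l1 * T powr l2 - (l2 - l1))"
    proof -
      have "psi P = X * T powr l1 + Y * T powr l2 - (Av * P powr l1 + c * P) + E * b"
        unfolding psi_def powT[symmetric] by simp
      also have "\<dots> = l2 * D / (l2 - l1) * T powr l1 + (- l1 * D / (l2 - l1)) * T powr l2 - D"
        unfolding Xv Yv AcP D_def by (simp add: algebra_simps)
      also have "\<dots> = D / (l2 - l1) * (l2 * T powr l1 - l1 * T powr l2 - (l2 - l1))"
        using nz1 by (intro aux4) simp
      finally show ?thesis .
    qed
    have exprpos: "l2 * T powr l1 - l1 * T powr l2 - (l2 - l1) > 0" if "T > 1"
    proof -
      have t1: "T powr l1 > 1 + l1 * (T - 1)" using that l1 by (intro powr_tangent) auto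
      have t2: "T powr l2 > 1 + l2 * (T - 1)" using that l2 by (intro powr_tangent) auto
      have "l2 * T powr l1 > l2 * (1 + l1 * (T - 1))" using t1 l2 by simp
      moreover have "- l1 * T powr l2 > - l1 * (1 + l2 * (T - 1))" using t2 l1 by simp
      ultimately show ?thesis by (simp add: algebra_simps)
    qed
    have psiP_nonneg: "psi P \<ge> 0"
    proof (cases "T = 1")
      case True then show ?thesis using psiP by simp
    next
      case False
      then have "T > 1" using T1 by simp
      then show ?thesis using psiP exprpos Dpos l1 l2 by simp
    qed
    have psiP_pos: "psi P > 0" if "p1 < P"
    proof -
      have "T > 1" using that p1 by (simp add: T_def)
      then show ?thesis using psiP exprpos Dpos l1 l2 by simp
    qed
    have rhoP_pos: "rho P > 0" if "p1 < P"
    proof -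
      have "T > 1" using that p1 by (simp add: T_def)
      then have TT: "T powr l2 > 1" using l2 by simp
      have hc: "(1 - l1) * c * P = - E * l1 * a" using Pfacts(2) nz1
        by (simp add: field_simps)
      have "rho P * P powr l2 = (l2 - l1) * (B2 * P powr l2) - (1 - l1) * c * P - l1 * E * b"
        unfolding eta[OF Ppos] by (simp add: mult.assoc)
      also have "\<dots> = (l2 - l1) * Y * T powr l2 + E * l1 * a - l1 * E * b"
        unfolding powT(2) hc by (simp add: mult.assoc)
      finally have "rho P * P powr l2 = (l2 - l1) * Y * T powr l2 + E * l1 * a - l1 * E * b" .
      also have "\<dots> = - l1 * D * (T powr l2 - 1)"
        unfolding Yv D_def using nz1 by (simp add: field_simps)
      also have "\<dots> > 0" using TT Dpos l1 by (intro mult_pos_pos) auto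
      finally show ?thesis using Ppos by (simp add: zero_less_mult_iff)
    qed
    show False
    proof (cases "P < p2")
      case True
      have der: "DERIV chi z :> z powr (l2 - l1 - 1) * rho z" if "P \<le> z" "z \<le> p2" for z
        unfolding chi_def rho_def using deriv_chi[of z B1 Av B2 l2 l1 c E b] that Ppos by simp
      obtain z where z: "P < z" "z < p2" "chi p2 - chi P = (p2 - P) * (z powr (l2 - l1 - 1) * rho z)"
        using MVT2[OF True der] by blast
      have "rho z > rho p2" using z Ppos p2q by (intro rho_dec) auto
      then have "z powr (l2 - l1 - 1) * rho z > 0" using rho2 z Ppos by simp
      then have "chi p2 - chi P > 0" using z True by simp
      moreover have "chi P \<ge> 0" using chipsi[OF Ppos] psiP_nonneg by simp
      ultimately show False using chi2 by simp
    next
      case False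
      show False
      proof (cases "P = p2")
        case True
        then show False using psiP_pos psi2 p12 by simp
      next
        case False
        then have "p2 < P" using \<open>\<not> P < p2\<close> by simp
        moreover have "P \<le> q0" using hPq by (simp add: P_def q0_def)
        ultimately have "rho p2 > rho P" using p2pos by (intro rho_dec) auto
        then show False using rho2 rhoP_pos \<open>p2 < P\<close> p12 by simp
      qed
    qed
  qed
  show ?thesis using claim1 claim2 q0_def by simp
qed

theorem corollary5p6:
  fixes mu sigma r C KI KO delta l1 l2 :: real
  assumes sigma: "sigma > 0" and rpos: "r > 0" and delta: "delta \<ge> 0"
    and roots: "r - mu * l1 - sigma^2 / 2 * l1 * (l1 - 1) = 0"
               "r - mu * l2 - sigma^2 / 2 * l2 * (l2 - 1) = 0"
    and l12: "l1 < l2"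
    and rmu: "r > mu"
  shows
   "(C - r * KO \<le> 0 \<and> C + r * KI > 0 \<longrightarrow>
       exp (- mu * delta) * (l2 / (l2 - 1)) * (r - mu) * (C / r + KI)
         > exp (- mu * delta) * (C + r * KI))
  \<and> (\<forall>pI. C - r * KO > 0 \<and> C + r * KI > 0 \<and> KI + KO \<ge> 0
       \<and> pI > 0
       \<and> Acoef mu r C KO delta l1 * (l2 - l1) * pI powr l1
           + exp ((mu - r) * delta) / (r - mu) * (l2 - 1) * pI
           - l2 * exp (- r * delta) * (C / r + KI) = 0
       \<and> (\<forall>p. p > 0 \<and> Acoef mu r C KO delta l1 * (l2 - l1) * p powr l1
           + exp ((mu - r) * delta) / (r - mu) * (l2 - 1) * p
           - l2 * exp (- r * delta) * (C / r + KI) = 0 \<longrightarrow> p \<le> pI)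
       \<longrightarrow> pI > exp (- mu * delta) * (C + r * KI))
  \<and> (\<forall>p1 p2 B1 B2. C - r * KO > 0 \<and> C + r * KI > 0 \<and> KI + KO < 0
       \<and> pO mu r C KO delta l1 < exp (- mu * delta) * (C + r * KI)
       \<and> 0 < p1 \<and> p1 < p2 \<and> p1 \<le> pO mu r C KO delta l1
       \<and> B1 * p1 powr l1 + B2 * p1 powr l2 = - exp (- r * delta) * (KI + KO)
       \<and> l1 * B1 * p1 powr (l1 - 1) + l2 * B2 * p1 powr (l2 - 1) = 0
       \<and> B1 * p2 powr l1 + B2 * p2 powr l2
           = Acoef mu r C KO delta l1 * p2 powr l1
             + exp ((mu - r) * delta) / (r - mu) * p2 - exp (- r * delta) * (C / r + KI)
       \<and> l1 * B1 * p2 powr (l1 - 1) + l2 * B2 * p2 powr (l2 - 1)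
           = l1 * Acoef mu r C KO delta l1 * p2 powr (l1 - 1)
             + exp ((mu - r) * delta) / (r - mu)
       \<longrightarrow> p1 < exp (- mu * delta) * (C - r * KO)
         \<and> p2 > exp (- mu * delta) * (C + r * KI))"
proof -
  define s where "s = sigma^2/2"
  have s: "s > 0" using sigma by (simp add: s_def)
  have B: "mu = s * (1 - l1 - l2)" "r = - s * l1 * l2" "l1 < 0" "l2 > 1"
    using basics[OF sigma rpos roots l12 rmu] by (simp_all add: s_def)
  have "r - mu * l2 = s * l2 * (l2 - 1)" using roots(2) by (simp add: s_def)
  moreover have "s * l2 * (l2 - 1) > 0" using s B by simp
  ultimately have rl2: "r - mu * l2 > 0" by simp
  show ?thesis
  proof (intro conjI allI impI)
    assume "C - r * KO \<le> 0 \<and> C + r * KI > 0"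
    then show "exp (- mu * delta) * (l2 / (l2 - 1)) * (r - mu) * (C / r + KI)
         > exp (- mu * delta) * (C + r * KI)"
      using partA[OF rpos B(4) rl2] by blast
  next
    fix pI
    assume h: "C - r * KO > 0 \<and> C + r * KI > 0 \<and> KI + KO \<ge> 0
       \<and> pI > 0
       \<and> Acoef mu r C KO delta l1 * (l2 - l1) * pI powr l1
           + exp ((mu - r) * delta) / (r - mu) * (l2 - 1) * pI
           - l2 * exp (- r * delta) * (C / r + KI) = 0
       \<and> (\<forall>p. p > 0 \<and> Acoef mu r C KO delta l1 * (l2 - l1) * p powr l1
           + exp ((mu - r) * delta) / (r - mu) * (l2 - 1) * p
           - l2 * exp (- r * delta) * (C / r + KI) = 0 \<longrightarrow> p \<le> pI)"
    show "pI > exp (- mu * delta) * (C + r * KI)"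
      using partB[OF s B rpos rmu] h by blast
  next
    fix p1 p2 B1 B2
    assume h: "C - r * KO > 0 \<and> C + r * KI > 0 \<and> KI + KO < 0
       \<and> pO mu r C KO delta l1 < exp (- mu * delta) * (C + r * KI)
       \<and> 0 < p1 \<and> p1 < p2 \<and> p1 \<le> pO mu r C KO delta l1
       \<and> B1 * p1 powr l1 + B2 * p1 powr l2 = - exp (- r * delta) * (KI + KO)
       \<and> l1 * B1 * p1 powr (l1 - 1) + l2 * B2 * p1 powr (l2 - 1) = 0
       \<and> B1 * p2 powr l1 + B2 * p2 powr l2
           = Acoef mu r C KO delta l1 * p2 powr l1
             + exp ((mu - r) * delta) / (r - mu) * p2 - exp (- r * delta) * (C / r + KI)
       \<and> l1 * B1 * p2 powr (l1 - 1) + l2 * B2 * p2 powr (l2 - 1)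
           = l1 * Acoef mu r C KO delta l1 * p2 powr (l1 - 1)
             + exp ((mu - r) * delta) / (r - mu)"
    have "p1 < exp (- mu * delta) * (C - r * KO) \<and> p2 > exp (- mu * delta) * (C + r * KI)"
      using h partC[OF s B rpos rmu, of C KO KI delta p1 p2 B1 B2] by blast
    then show "p1 < exp (- mu * delta) * (C - r * KO)" "p2 > exp (- mu * delta) * (C + r * KI)"
      by auto
  qed
qed


end
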